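(* Let $r>0$ and let $z\colon[0,r)\to[0,r)$ be a homeomorphism with $(\alpha)z>\alpha$ for all $\alpha\in(0,r)$. Let $f$ be a permutation of $[0,r)$ such that $f$ commutes with $z$, $f$ is right-continuous at $0$, and $f$ has only finitely many points of discontinuity. Then $f$ is continuous (for the usual topology).
   Context: Maps act on the right: $(\alpha)z$ denotes the image of $\alpha$ under $z$, and $(\alpha)(fz)=((\alpha)f)z$. *)

theory Defs
  imports "HOL-Analysis.Analysis"
begin

end

theory Submission
  imports Defs
begin

lemma zero_ok:
  fixes f :: "real \<Rightarrow> real" and r :: real
  assumes "continuous (at_right 0) f"
  shows "continuous (at 0 within {0..<r}) f"
proof -
  have "(f \<longlongrightarrow> f 0) (at_right 0)" using assms
    by (simp add: continuous_within)
  moreover have "at (0::real) within {0..<r} \<le> at_right 0"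
    unfolding at_within_def by (rule inf_mono) auto
  ultimately show ?thesis
    by (simp add: continuous_within filterlim_mono)
qed

theorem lemma3p1:
  fixes r :: real and z f :: "real \<Rightarrow> real"
  assumes r_pos: "r > 0"
    and z_homeo: "\<exists>g. homeomorphism {0..<r} {0..<r} z g"
    and z_gt: "\<And>\<alpha>. \<alpha> \<in> {0<..<r} \<Longrightarrow> z \<alpha> > \<alpha>"
    and f_perm: "bij_betw f {0..<r} {0..<r}"
    and f_comm: "\<And>\<alpha>. \<alpha> \<in> {0..<r} \<Longrightarrow> f (z \<alpha>) = z (f \<alpha>)"
    and f_rcont0: "continuous (at_right 0) f"
    and f_fin_disc: "finite {\<alpha> \<in> {0..<r}. \<not> continuous (at \<alpha> within {0..<r}) f}"
  shows "continuous_on {0..<r} f"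
proof -
  define S where "S = {0..<r::real}"
  obtain g where hg: "homeomorphism S S z g" using z_homeo S_def by auto
  have zS: "z x \<in> S" if "x \<in> S" for x using hg that unfolding homeomorphism_def by auto
  have gz: "g (z x) = x" if "x \<in> S" for x using hg that unfolding homeomorphism_def by auto
  have fS: "f x \<in> S" if "x \<in> S" for x using f_perm that unfolding S_def bij_betw_def by auto
  have zc: "continuous_on S z" and gc: "continuous_on S g"
    using hg unfolding homeomorphism_def by auto
  have feq: "f x = g (f (z x))" if "x \<in> S" for x
    using f_comm[of x] that gz[OF fS[OF that]] unfolding S_def by simp
  define D where "D = {\<alpha> \<in> S. \<not> continuous (at \<alpha> within S) f}"
  have Dfin: "finite D" using f_fin_disc unfolding D_def S_def by simp
  have trans: "z x \<in> D" if "x \<in> D" for x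
  proof (rule ccontr)
    assume nz: "z x \<notin> D"
    have xS: "x \<in> S" using that D_def by auto
    have c1: "continuous (at (z x) within S) f" using nz zS[OF xS] D_def by auto
    have c0: "continuous (at x within S) z"
      using zc xS by (simp add: continuous_on_eq_continuous_within)
    have c2: "continuous (at x within S) (f \<circ> z)"
      by (rule continuous_within_compose[OF c0]) (use c1 zS in \<open>auto intro: continuous_within_subset\<close>)
    have c3: "continuous (at (f (z x)) within S) g"
      using gc fS[OF zS[OF xS]] by (simp add: continuous_on_eq_continuous_within)
    have c4: "continuous (at x within S) (g \<circ> (f \<circ> z))"
    proof (rule continuous_within_compose[OF c2])
      have "(f \<circ> z) ` S \<subseteq> S" using fS zS by auto
      then show "continuous (at ((f \<circ> z) x) within (f \<circ> z) ` S) g"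
        using c3 by (auto intro: continuous_within_subset)
    qed
    have "continuous (at x within S) f"
      using c4 xS feq by (auto intro: continuous_transform_within[where \<delta>=1] simp: dist_commute)
    then show False using that D_def by auto
  qed
  have "D = {}"
  proof (rule ccontr)
    assume "D \<noteq> {}"
    define m where "m = Max D"
    have mD: "m \<in> D" using Dfin \<open>D \<noteq> {}\<close> m_def by auto
    have "m \<noteq> 0"
      using mD zero_ok[OF f_rcont0, of r] unfolding D_def S_def by auto
    then have "m \<in> {0<..<r}" using mD D_def S_def by auto
    then have "z m > m" by (rule z_gt)
    moreover have "z m \<le> m" using trans[OF mD] Dfin m_def by auto
    ultimately show False by simp
  qed
  then show ?thesis
    unfolding D_def S_def by (auto simp: continuous_on_eq_continuous_within)
qed

end
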